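(* Let $s>3/2$. There is a constant $C>0$ such that for all $\sigma\in(1/2,1]$, all $\omega\in\{-1,1\}$, all integers $n\ge1$ and all $t\in\mathbb R$, the error $E=E^{\omega,n}(t)$ satisfies \[\|E(t)\|_{H^\sigma}\le\begin{cases}C\,n^{-2s+1+\sigma},& 3/2<s<2,\\ C\,n^{-s-1+\sigma},& s\ge2.\end{cases}\]
   Context: $\mathbb S=\mathbb R/(2\pi\mathbb Z)$. For $r\in\mathbb R$, $H^r(\mathbb S)$ is the Sobolev space with norm $\|u\|_{H^r}^2=\sum_{k\in\mathbb Z}(1+k^2)^r|\langle u,\phi_k\rangle|^2$, where $\phi_k(x)=e^{ikx}/\sqrt{2\pi}$, and $\Lambda^r=(1-\partial_x^2)^{r/2}$ is the Fourier multiplier with symbol $(1+k^2)^{r/2}$. For a function $u$ set $R(u):=7u_x^2-3u^4+2u^3-10u^2-2u$. For $s>3/2$, $\omega\in\{-1,1\}$ and integer $n\ge1$ define the approximate solution \[u^{\omega,n}(t,x):=\frac{\omega n^{-1}-1-n^{-s}\cos(nx+\omega t)}{14},\] and its error $E:=u^{\omega,n}_t-u^{\omega,n}_x-14u^{\omega,n}u^{\omega,n}_x-\partial_x\Lambda^{-2}R(u^{\omega,n})$. *)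

theory Defs
  imports "HOL-Analysis.Analysis"
begin

text \<open>Fourier basis on the circle S = R/(2 pi Z), functions represented as 2pi-periodic maps on R.\<close>
definition phi :: "int \<Rightarrow> real \<Rightarrow> complex" where
  "phi k x = exp (\<i> * of_int k * of_real x) / of_real (sqrt (2 * pi))"

definition fcoeff :: "(real \<Rightarrow> complex) \<Rightarrow> int \<Rightarrow> complex" where
  "fcoeff u k = integral {0..2*pi} (\<lambda>x. u x * cnj (phi k x))"

definition sobolev_norm :: "real \<Rightarrow> (real \<Rightarrow> complex) \<Rightarrow> real" where
  "sobolev_norm r u =
     sqrt (\<Sum>\<^sub>\<infinity>k\<in>(UNIV::int set). (1 + (real_of_int k)^2) powr r * (cmod (fcoeff u k))^2)"

definition fmult :: "(int \<Rightarrow> complex) \<Rightarrow> (real \<Rightarrow> complex) \<Rightarrow> real \<Rightarrow> complex" where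
  "fmult m u x = (\<Sum>\<^sub>\<infinity>k\<in>(UNIV::int set). m k * fcoeff u k * phi k x)"

definition dx_Lambda_m2 :: "(real \<Rightarrow> complex) \<Rightarrow> real \<Rightarrow> complex" where
  "dx_Lambda_m2 = fmult (\<lambda>k. \<i> * of_int k / of_real (1 + (real_of_int k)^2))"

definition uapp :: "real \<Rightarrow> real \<Rightarrow> nat \<Rightarrow> real \<Rightarrow> real \<Rightarrow> real" where
  "uapp s \<omega> n t x = (\<omega> / real n - 1 - real n powr (-s) * cos (real n * x + \<omega> * t)) / 14"

definition Rnl :: "(real \<Rightarrow> real) \<Rightarrow> real \<Rightarrow> real" where
  "Rnl u x = 7 * (deriv u x)^2 - 3 * (u x)^4 + 2 * (u x)^3 - 10 * (u x)^2 - 2 * u x"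

definition Err :: "real \<Rightarrow> real \<Rightarrow> nat \<Rightarrow> real \<Rightarrow> real \<Rightarrow> complex" where
  "Err s \<omega> n t x =
     of_real (deriv (\<lambda>\<tau>. uapp s \<omega> n \<tau> x) t
              - deriv (\<lambda>y. uapp s \<omega> n t y) x
              - 14 * uapp s \<omega> n t x * deriv (\<lambda>y. uapp s \<omega> n t y) x)
     - dx_Lambda_m2 (\<lambda>y. of_real (Rnl (\<lambda>z. uapp s \<omega> n t z) y)) x"

end

theory Submission
  imports Defs
begin

lemma sqrt2pi_sq: "complex_of_real (sqrt (2*pi)) * complex_of_real (sqrt (2*pi)) = complex_of_real (2*pi)"
proof -
  have "sqrt (2*pi) * sqrt (2*pi) = 2*pi" using pi_gt_zero by simp
  then show ?thesis by (simp only: of_real_mult[symmetric])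
qed

lemma sqrt2pi_nz: "complex_of_real (sqrt (2*pi)) \<noteq> 0"
  using pi_gt_zero by simp

lemma phi_mult_cnj: "phi k x * cnj (phi j x) = exp (\<i> * of_int (k - j) * of_real x) / complex_of_real (2 * pi)"
proof -
  have c: "cnj (exp (\<i> * of_int j * of_real x)) = exp (- (\<i> * of_int j * of_real x))"
    unfolding exp_cnj by simp
  have "\<i> * of_int k * of_real x + (- (\<i> * of_int j * of_real x)) = \<i> * of_int (k - j) * (of_real x :: complex)"
    by (simp add: algebra_simps)
  then have m: "exp (\<i> * of_int k * of_real x) * exp (- (\<i> * of_int j * of_real x)) = exp (\<i> * of_int (k - j) * of_real x)"
    by (simp only: exp_add[symmetric])
  have "phi k x * cnj (phi j x) = (exp (\<i> * of_int k * of_real x) * cnj (exp (\<i> * of_int j * of_real x))) / (complex_of_real (sqrt (2*pi)) * complex_of_real (sqrt (2*pi)))"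
    unfolding phi_def by (simp only: complex_cnj_divide complex_cnj_complex_of_real times_divide_times_eq)
  also have "\<dots> = exp (\<i> * of_int (k - j) * of_real x) / complex_of_real (2 * pi)"
    by (simp only: c m sqrt2pi_sq)
  finally show ?thesis .
qed

lemma e2pi: "exp ((\<i> * of_int m) * of_real (2*pi)) = (1::complex)"
proof -
  have "(\<i> * of_int m) * of_real (2*pi) = \<i> * (of_int m * (of_real pi * 2))" by (simp add: algebra_simps)
  then show ?thesis by (simp only: exp_2pi_1_int)
qed

lemma int_exp_period: "integral {0..2*pi} (\<lambda>x. exp (\<i> * of_int m * of_real x)) = (if m = 0 then complex_of_real (2 * pi) else 0)"
proof (cases "m = 0")
  case True
  have "(\<lambda>x::real. exp (\<i> * of_int m * of_real x)) = (\<lambda>x. 1)" using True by simp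
  then show ?thesis using True by (simp add: scaleR_conv_of_real)
next
  case False
  have "integral {0..2*pi} (\<lambda>x. exp ((\<i> * of_int m) * complex_of_real x)) = (exp ((\<i> * of_int m) * of_real (2*pi)) - 1) / (\<i> * of_int m)"
    by (rule Kronecker_Approximation_Theorem.integral_exp) (use False in auto)
  also have "\<dots> = 0" by (simp only: e2pi diff_self div_0)
  finally have "integral {0..2*pi} (\<lambda>x. exp ((\<i> * of_int m) * complex_of_real x)) = 0" .
  then show ?thesis using False by (simp only: if_False)
qed

lemma orth: "integral {0..2*pi} (\<lambda>x. phi k x * cnj (phi j x)) = (if k = j then 1 else 0)"
proof -
  have "integral {0..2*pi} (\<lambda>x. phi k x * cnj (phi j x)) = integral {0..2*pi} (\<lambda>x. exp (\<i> * of_int (k - j) * of_real x)) / complex_of_real (2*pi)"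
    unfolding phi_mult_cnj by (rule integral_divide)
  also have "\<dots> = (if k - j = 0 then complex_of_real (2 * pi) else 0) / complex_of_real (2*pi)"
    by (simp only: int_exp_period)
  also have "\<dots> = (if k = j then 1 else 0)" using pi_gt_zero by auto
  finally show ?thesis .
qed

lemma cont_phi: "continuous_on A (phi k)"
  unfolding phi_def using sqrt2pi_nz by (intro continuous_intros) auto

lemma cont_tp: "continuous_on A (\<lambda>x. \<Sum>k\<in>K. c k * phi k x)"
  by (intro continuous_intros continuous_on_mult_left cont_phi)

lemma fcoeff_tp:
  assumes "finite K"
  shows "fcoeff (\<lambda>x. \<Sum>k\<in>K. c k * phi k x) j = (if j \<in> K then c j else 0)"
proof -
  have "fcoeff (\<lambda>x. \<Sum>k\<in>K. c k * phi k x) j = integral {0..2*pi} (\<lambda>x. \<Sum>k\<in>K. c k * (phi k x * cnj (phi j x)))"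
    unfolding fcoeff_def by (simp add: sum_distrib_right mult.assoc)
  also have "\<dots> = (\<Sum>k\<in>K. integral {0..2*pi} (\<lambda>x. c k * (phi k x * cnj (phi j x))))"
    by (rule integral_sum[OF assms]) (intro ballI integrable_continuous_interval continuous_intros cont_phi)
  also have "\<dots> = (\<Sum>k\<in>K. c k * (if k = j then 1 else 0))"
    by (simp add: orth)
  also have "\<dots> = (if j \<in> K then c j else 0)"
    using assms by (simp add: if_distrib sum.delta' cong: if_cong)
  finally show ?thesis .
qed

lemma parseval_bound:
  assumes K: "finite K" and M: "\<And>x. x \<in> {0..2*pi} \<Longrightarrow> cmod (\<Sum>k\<in>K. c k * phi k x) \<le> M"
  shows "(\<Sum>k\<in>K. (cmod (c k))^2) \<le> 2 * pi * M^2"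
proof -
  define f where "f = (\<lambda>x. \<Sum>k\<in>K. c k * phi k x)"
  have "integral {0..2*pi} (\<lambda>x. f x * cnj (f x)) = integral {0..2*pi} (\<lambda>x. \<Sum>j\<in>K. cnj (c j) * (f x * cnj (phi j x)))"
    unfolding f_def by (simp add: sum_distrib_left cnj_sum mult.commute mult.left_commute)
  also have "\<dots> = (\<Sum>j\<in>K. integral {0..2*pi} (\<lambda>x. cnj (c j) * (f x * cnj (phi j x))))"
    unfolding f_def by (rule integral_sum[OF K]) (intro ballI integrable_continuous_interval continuous_intros cont_phi)
  also have "\<dots> = (\<Sum>j\<in>K. cnj (c j) * fcoeff f j)"
    unfolding fcoeff_def by simp
  also have "\<dots> = (\<Sum>j\<in>K. of_real ((cmod (c j))^2))"
  proof (intro sum.cong refl)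
    fix j assume j: "j \<in> K"
    have "fcoeff f j = c j" unfolding f_def fcoeff_tp[OF K] using j by simp
    then show "cnj (c j) * fcoeff f j = of_real ((cmod (c j))^2)"
      by (simp only: complex_norm_square mult.commute)
  qed
  finally have eq: "integral {0..2*pi} (\<lambda>x. f x * cnj (f x)) = of_real (\<Sum>j\<in>K. (cmod (c j))^2)" by simp
  have "norm (integral {0..2*pi} (\<lambda>x. f x * cnj (f x))) \<le> M^2 * (2*pi - 0)"
  proof (rule integral_bound)
    show "continuous_on {0..2*pi} (\<lambda>x. f x * cnj (f x))"
      unfolding f_def by (intro continuous_intros cont_phi)
    fix x assume x: "x \<in> {0..2*pi}"
    have "norm (f x * cnj (f x)) = (cmod (f x))^2" by (simp add: norm_mult power2_eq_square)
    also have "\<dots> \<le> M^2" using M[OF x] unfolding f_def by (intro power_mono) auto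
    finally show "norm (f x * cnj (f x)) \<le> M^2" .
  qed (use pi_gt_zero in simp)
  moreover have "norm (complex_of_real (\<Sum>j\<in>K. (cmod (c j))^2)) = (\<Sum>j\<in>K. (cmod (c j))^2)"
    by (simp only: norm_of_real) (simp add: sum_nonneg)
  ultimately show ?thesis unfolding eq by (simp add: mult.commute)
qed

definition Kd :: "nat \<Rightarrow> nat \<Rightarrow> int set" where
  "Kd n d = {k. int n dvd k \<and> \<bar>k\<bar> \<le> int d * int n}"

definition TP :: "nat \<Rightarrow> nat \<Rightarrow> (real \<Rightarrow> complex) \<Rightarrow> bool" where
  "TP n d f \<longleftrightarrow> (\<exists>c. \<forall>x. f x = (\<Sum>k\<in>Kd n d. c k * phi k x))"

lemma finite_Kd: "finite (Kd n d)"
  by (rule finite_subset[of _ "{-(int d * int n)..int d * int n}"]) (auto simp: Kd_def)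

lemma Kd_mono: "d \<le> e \<Longrightarrow> Kd n d \<subseteq> Kd n e"
  unfolding Kd_def using mult_right_mono[of "int d" "int e" "int n"] by (auto intro: order_trans)

lemma Kd_add: "k \<in> Kd n d \<Longrightarrow> l \<in> Kd n e \<Longrightarrow> k + l \<in> Kd n (d + e)"
  unfolding Kd_def by (auto simp: algebra_simps intro: order_trans[OF abs_triangle_ineq])

lemma zero_Kd: "0 \<in> Kd n d"
  unfolding Kd_def by simp

lemma sum_extend:
  assumes "finite L" "K \<subseteq> L"
  shows "(\<Sum>k\<in>L. (if k \<in> K then c k else 0) * phi k x) = (\<Sum>k\<in>K. c k * phi k x)"
proof -
  have "(\<Sum>k\<in>L. (if k \<in> K then c k else 0) * phi k x) = (\<Sum>k\<in>L. if k \<in> K then c k * phi k x else 0)"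
    by (intro sum.cong) auto
  also have "\<dots> = (\<Sum>k\<in>L \<inter> K. c k * phi k x)"
    using assms by (simp add: sum.inter_restrict)
  also have "L \<inter> K = K" using assms by auto
  finally show ?thesis by simp
qed

lemma TP_mono: assumes "d \<le> e" "TP n d f" shows "TP n e f"
proof -
  obtain c where c: "\<And>x. f x = (\<Sum>k\<in>Kd n d. c k * phi k x)" using assms unfolding TP_def by blast
  show ?thesis unfolding TP_def
    by (rule exI[of _ "\<lambda>k. if k \<in> Kd n d then c k else 0"])
       (simp add: c sum_extend[OF finite_Kd Kd_mono[OF assms(1)]])
qed

lemma TP_image:
  assumes I: "finite I" and h: "\<And>i. i \<in> I \<Longrightarrow> h i \<in> Kd n d"
  shows "TP n d (\<lambda>x. \<Sum>i\<in>I. a i * phi (h i) x)"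
proof -
  define c where "c k = (\<Sum>i\<in>{i \<in> I. h i = k}. a i)" for k
  have "(\<Sum>i\<in>I. a i * phi (h i) x) = (\<Sum>k\<in>h ` I. c k * phi k x)" for x
  proof -
    have "(\<Sum>i\<in>I. a i * phi (h i) x) = (\<Sum>k\<in>h ` I. \<Sum>i\<in>{i \<in> I. h i = k}. a i * phi (h i) x)"
      by (rule sum.image_gen[OF I])
    also have "\<dots> = (\<Sum>k\<in>h ` I. c k * phi k x)"
      unfolding c_def sum_distrib_right by (intro sum.cong refl) auto
    finally show ?thesis .
  qed
  moreover have "h ` I \<subseteq> Kd n d" using h by auto
  ultimately show ?thesis unfolding TP_def
    by (intro exI[of _ "\<lambda>k. if k \<in> h ` I then c k else 0"]) (simp add: sum_extend[OF finite_Kd])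
qed

lemma TP_add: assumes "TP n d f" "TP n d g" shows "TP n d (\<lambda>x. f x + g x)"
proof -
  obtain c where c: "\<And>x. f x = (\<Sum>k\<in>Kd n d. c k * phi k x)" using assms unfolding TP_def by blast
  obtain c' where c': "\<And>x. g x = (\<Sum>k\<in>Kd n d. c' k * phi k x)" using assms unfolding TP_def by blast
  show ?thesis unfolding TP_def
    by (rule exI[of _ "\<lambda>k. c k + c' k"]) (simp add: c c' distrib_right sum.distrib)
qed

lemma TP_scale: assumes "TP n d f" shows "TP n d (\<lambda>x. a * f x)"
proof -
  obtain c where c: "\<And>x. f x = (\<Sum>k\<in>Kd n d. c k * phi k x)" using assms unfolding TP_def by blast
  show ?thesis unfolding TP_def
    by (rule exI[of _ "\<lambda>k. a * c k"]) (simp add: c sum_distrib_left mult.assoc)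
qed

lemma TP_neg: "TP n d f \<Longrightarrow> TP n d (\<lambda>x. - f x)"
  using TP_scale[of n d f "-1"] by simp

lemma TP_diff: "TP n d f \<Longrightarrow> TP n d g \<Longrightarrow> TP n d (\<lambda>x. f x - g x)"
  using TP_add[of n d f "\<lambda>x. - g x"] TP_neg[of n d g] by simp

lemma TP_single: assumes "k \<in> Kd n d" shows "TP n d (\<lambda>x. a * phi k x)"
  using TP_image[of "{k}" "\<lambda>i. i" n d "\<lambda>_. a"] assms by simp

lemma phi0: "phi 0 x = 1 / complex_of_real (sqrt (2*pi))"
  unfolding phi_def by simp

lemma TP_const: "TP n d (\<lambda>x. a)"
proof -
  have "TP n d (\<lambda>x. (a * complex_of_real (sqrt (2*pi))) * phi 0 x)" by (rule TP_single[OF zero_Kd])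
  moreover have "(a * complex_of_real (sqrt (2*pi))) * phi 0 x = a" for x
    unfolding phi0 using sqrt2pi_nz by simp
  ultimately show ?thesis by simp
qed

lemma phi_mult: "phi k x * phi l x = phi (k + l) x / complex_of_real (sqrt (2*pi))"
proof -
  have "\<i> * of_int k * of_real x + \<i> * of_int l * of_real x = \<i> * of_int (k + l) * (of_real x :: complex)"
    by (simp add: algebra_simps)
  then have "exp (\<i> * of_int k * of_real x) * exp (\<i> * of_int l * of_real x) = exp (\<i> * of_int (k + l) * (of_real x :: complex))"
    by (simp only: exp_add[symmetric])
  then show ?thesis unfolding phi_def by (simp only: times_divide_times_eq divide_divide_eq_left)
qed

lemma TP_mult:
  assumes "TP n d f" "TP n e g"
  shows "TP n (d + e) (\<lambda>x. f x * g x)"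
proof -
  obtain c where c: "\<And>x. f x = (\<Sum>k\<in>Kd n d. c k * phi k x)" using assms unfolding TP_def by blast
  obtain c' where c': "\<And>x. g x = (\<Sum>k\<in>Kd n e. c' k * phi k x)" using assms unfolding TP_def by blast
  have "f x * g x = (\<Sum>p\<in>Kd n d \<times> Kd n e. (c (fst p) * c' (snd p) / complex_of_real (sqrt (2*pi))) * phi (fst p + snd p) x)" for x
  proof -
    have "f x * g x = (\<Sum>k\<in>Kd n d. \<Sum>l\<in>Kd n e. (c k * phi k x) * (c' l * phi l x))"
      unfolding c c' by (simp add: sum_product)
    also have "\<dots> = (\<Sum>k\<in>Kd n d. \<Sum>l\<in>Kd n e. (c k * c' l / complex_of_real (sqrt (2*pi))) * phi (k + l) x)"
      by (intro sum.cong refl) (simp add: phi_mult field_simps)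
    also have "\<dots> = (\<Sum>p\<in>Kd n d \<times> Kd n e. (c (fst p) * c' (snd p) / complex_of_real (sqrt (2*pi))) * phi (fst p + snd p) x)"
      by (simp add: sum.cartesian_product case_prod_beta)
    finally show ?thesis .
  qed
  moreover have "TP n (d + e) (\<lambda>x. \<Sum>p\<in>Kd n d \<times> Kd n e. (c (fst p) * c' (snd p) / complex_of_real (sqrt (2*pi))) * phi (fst p + snd p) x)"
    by (rule TP_image) (auto simp: finite_Kd intro: Kd_add)
  ultimately show ?thesis by simp
qed

lemma TP_pow: "TP n d f \<Longrightarrow> TP n (m * d) (\<lambda>x. f x ^ m)"
proof (induction m)
  case 0 then show ?case using TP_const[of n 0 1] by simp
next
  case (Suc m)
  have "TP n (d + m * d) (\<lambda>x. f x * f x ^ m)" by (rule TP_mult[OF Suc.prems Suc.IH[OF Suc.prems]])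
  then show ?case by simp
qed

lemma exp_lin: "exp (\<i> * complex_of_real (real n * y + c)) = (exp (\<i> * of_real c) * complex_of_real (sqrt (2*pi))) * phi (int n) y"
proof -
  have "\<i> * complex_of_real (real n * y + c) = \<i> * of_real c + \<i> * of_int (int n) * of_real y"
    by (simp add: algebra_simps)
  then show ?thesis unfolding phi_def using sqrt2pi_nz by (simp add: exp_add)
qed

lemma exp_lin_neg: "exp (- (\<i> * complex_of_real (real n * y + c))) = (exp (- (\<i> * of_real c)) * complex_of_real (sqrt (2*pi))) * phi (- int n) y"
proof -
  have "- (\<i> * complex_of_real (real n * y + c)) = - (\<i> * of_real c) + \<i> * of_int (- int n) * of_real y"
    by (simp add: algebra_simps)
  then have "exp (- (\<i> * complex_of_real (real n * y + c))) = exp (- (\<i> * of_real c)) * exp (\<i> * of_int (- int n) * of_real y)"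
    by (simp only: exp_add)
  then show ?thesis unfolding phi_def using sqrt2pi_nz by simp
qed

lemma n_Kd1: "int n \<in> Kd n 1" "- int n \<in> Kd n 1"
  unfolding Kd_def by auto

lemma TP_cos: "TP n 1 (\<lambda>y. complex_of_real (cos (real n * y + c)))"
proof -
  have "complex_of_real (cos (real n * y + c)) = (exp (\<i> * complex_of_real (real n * y + c)) + exp (- (\<i> * complex_of_real (real n * y + c)))) / 2" for y
    by (simp only: cos_of_real[symmetric] cos_exp_eq)
  then have e: "complex_of_real (cos (real n * y + c)) = (exp (\<i> * of_real c) * complex_of_real (sqrt (2*pi)) / 2) * phi (int n) y + (exp (- (\<i> * of_real c)) * complex_of_real (sqrt (2*pi)) / 2) * phi (- int n) y" for y
    unfolding exp_lin exp_lin_neg by (simp add: field_simps)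
  show ?thesis unfolding e by (intro TP_add TP_single n_Kd1)
qed

lemma TP_sin: "TP n 1 (\<lambda>y. complex_of_real (sin (real n * y + c)))"
proof -
  have "complex_of_real (sin (real n * y + c)) = (exp (\<i> * complex_of_real (real n * y + c)) - exp (- (\<i> * complex_of_real (real n * y + c)))) / (2 * \<i>)" for y
    by (simp only: sin_of_real[symmetric] sin_exp_eq)
  then have e: "complex_of_real (sin (real n * y + c)) = (exp (\<i> * of_real c) * complex_of_real (sqrt (2*pi)) / (2 * \<i>)) * phi (int n) y - (exp (- (\<i> * of_real c)) * complex_of_real (sqrt (2*pi)) / (2 * \<i>)) * phi (- int n) y" for y
    unfolding exp_lin exp_lin_neg by (simp add: field_simps)
  show ?thesis unfolding e by (intro TP_diff TP_single n_Kd1)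
qed

lemma deriv_t: "deriv (\<lambda>\<tau>. uapp s \<omega> n \<tau> x) t = real n powr (-s) * \<omega> * sin (real n * x + \<omega> * t) / 14"
proof -
  have "((\<lambda>\<tau>. uapp s \<omega> n \<tau> x) has_real_derivative real n powr (-s) * \<omega> * sin (real n * x + \<omega> * t) / 14) (at t)"
    unfolding uapp_def by (auto intro!: derivative_eq_intros simp: algebra_simps)
  then show ?thesis by (rule DERIV_imp_deriv)
qed

lemma deriv_x: "deriv (\<lambda>y. uapp s \<omega> n t y) x = real n powr (-s) * real n * sin (real n * x + \<omega> * t) / 14"
proof -
  have "((\<lambda>y. uapp s \<omega> n t y) has_real_derivative real n powr (-s) * real n * sin (real n * x + \<omega> * t) / 14) (at x)"
    unfolding uapp_def by (auto intro!: derivative_eq_intros simp: algebra_simps)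
  then show ?thesis by (rule DERIV_imp_deriv)
qed

lemma F1_eq:
  assumes "n \<ge> 1"
  shows "deriv (\<lambda>\<tau>. uapp s \<omega> n \<tau> x) t - deriv (\<lambda>y. uapp s \<omega> n t y) x
              - 14 * uapp s \<omega> n t x * deriv (\<lambda>y. uapp s \<omega> n t y) x
        = (real n powr (-s))^2 * real n / 14 * sin (real n * x + \<omega> * t) * cos (real n * x + \<omega> * t)"
proof -
  have nz: "real n \<noteq> 0" using assms by simp
  show ?thesis unfolding deriv_t deriv_x unfolding uapp_def using nz
    by (simp add: field_simps power2_eq_square)
qed

definition Pp :: "real \<Rightarrow> real" where "Pp u = - 3 * u^4 + 2 * u^3 - 10 * u^2 - 2 * u"

lemma Rnl_eq: "Rnl (\<lambda>z. uapp s \<omega> n t z) y =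
   7 * (real n powr (-s) * real n * sin (real n * y + \<omega> * t) / 14)^2 + Pp (uapp s \<omega> n t y)"
  unfolding Rnl_def deriv_x Pp_def by simp

lemma lin40:
  fixes A B C D E F G H I :: real
  assumes "\<bar>A\<bar> \<le> 1" "\<bar>B\<bar> \<le> 1" "\<bar>C\<bar> \<le> 1" "\<bar>D\<bar> \<le> 1" "\<bar>E\<bar> \<le> 1"
    "\<bar>F\<bar> \<le> 1" "\<bar>G\<bar> \<le> 1" "\<bar>H\<bar> \<le> 1" "\<bar>I\<bar> \<le> 1"
  shows "\<bar>- 3 * (A + B + C + D) + 2 * (E + F + G) - 10 * (H + I) - 2\<bar> \<le> 40"
  using assms by (simp add: abs_le_iff)

lemma Pp_lip:
  assumes u: "\<bar>u\<bar> \<le> 1" and v: "\<bar>v\<bar> \<le> 1"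
  shows "\<bar>Pp u - Pp v\<bar> \<le> 40 * \<bar>u - v\<bar>"
proof -
  define Q where "Q = - 3 * (u ^ 3 + u ^ 2 * v + u * v ^ 2 + v ^ 3) + 2 * (u ^ 2 + u * v + v ^ 2) - 10 * (u + v) - 2"
  have id: "Pp u - Pp v = (u - v) * Q" unfolding Q_def Pp_def by algebra
  have au: "\<bar>u\<bar> ^ k \<le> 1" "\<bar>v\<bar> ^ k \<le> 1" for k using u v by (auto intro: power_le_one)
  have m1: "\<bar>u^3\<bar> \<le> 1" "\<bar>v^3\<bar> \<le> 1" "\<bar>u^2\<bar> \<le> 1" "\<bar>v^2\<bar> \<le> 1"
    using au[of 3] au[of 2] by (simp_all add: power_abs)
  have m2: "\<bar>u ^ 2 * v\<bar> \<le> 1" "\<bar>u * v ^ 2\<bar> \<le> 1" "\<bar>u * v\<bar> \<le> 1"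
    using au[of 2] u v by (simp_all add: abs_mult mult_le_one)
  have "\<bar>Q\<bar> \<le> 40" unfolding Q_def by (rule lin40[OF m1(1) m2(1) m2(2) m1(2) m1(3) m2(3) m1(4) u v])
  then have "\<bar>Pp u - Pp v\<bar> \<le> \<bar>u - v\<bar> * 40" unfolding id abs_mult by (intro mult_left_mono) auto
  then show ?thesis by (simp add: mult.commute)
qed

lemma TP_mult11: "TP n 1 f \<Longrightarrow> TP n 1 g \<Longrightarrow> TP n 2 (\<lambda>x. f x * g x)"
  using TP_mult[of n 1 f 1 g] by (simp only: one_add_one)

lemma TP_U: "TP n 1 (\<lambda>y. complex_of_real (uapp s \<omega> n t y))"
proof -
  have "TP n 1 (\<lambda>y. complex_of_real ((\<omega> / real n - 1) / 14) + complex_of_real (- (real n powr (-s)) / 14) * complex_of_real (cos (real n * y + \<omega> * t)))"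
    by (intro TP_add TP_const TP_scale TP_cos)
  moreover have "complex_of_real (uapp s \<omega> n t y) = complex_of_real ((\<omega> / real n - 1) / 14) + complex_of_real (- (real n powr (-s)) / 14) * complex_of_real (cos (real n * y + \<omega> * t))" for y
    unfolding uapp_def by (simp add: field_simps)
  ultimately show ?thesis by simp
qed

lemma TP_R: "TP n 4 (\<lambda>y. complex_of_real (Rnl (\<lambda>z. uapp s \<omega> n t z) y))"
proof -
  define U where "U y = complex_of_real (uapp s \<omega> n t y)" for y
  define S where "S y = complex_of_real (sin (real n * y + \<omega> * t))" for y
  have U: "TP n 1 U" unfolding U_def by (rule TP_U)
  have S: "TP n 1 S" unfolding S_def by (rule TP_sin)
  have e: "complex_of_real (Rnl (\<lambda>z. uapp s \<omega> n t z) y) =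
     complex_of_real (7 * (real n powr (-s) * real n / 14)^2) * (S y * S y) + (-3) * U y ^ 4 + 2 * U y ^ 3 + (-10) * U y ^ 2 + (-2) * U y" for y
    unfolding Rnl_eq Pp_def U_def S_def by (simp add: power_mult_distrib power2_eq_square)
  have t1: "TP n 4 (\<lambda>y. complex_of_real (7 * (real n powr (-s) * real n / 14)^2) * (S y * S y))"
    by (rule TP_mono[OF _ TP_scale[OF TP_mult11[OF S S]]]) simp
  have p4: "TP n 4 (\<lambda>y. U y ^ 4)" using TP_pow[OF U, of 4] by (simp only: mult_1_right)
  have p3: "TP n 3 (\<lambda>y. U y ^ 3)" using TP_pow[OF U, of 3] by (simp only: mult_1_right)
  have p2: "TP n 2 (\<lambda>y. U y ^ 2)" using TP_pow[OF U, of 2] by (simp only: mult_1_right)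
  have t2: "TP n 4 (\<lambda>y. (-3) * U y ^ 4)" by (rule TP_scale[OF p4])
  have t3: "TP n 4 (\<lambda>y. 2 * U y ^ 3)" by (rule TP_mono[OF _ TP_scale[OF p3]]) simp
  have t4: "TP n 4 (\<lambda>y. (-10) * U y ^ 2)" by (rule TP_mono[OF _ TP_scale[OF p2]]) simp
  have t5: "TP n 4 (\<lambda>y. (-2) * U y)" by (rule TP_mono[OF _ TP_scale[OF U]]) simp
  have "TP n 4 (\<lambda>y. complex_of_real (7 * (real n powr (-s) * real n / 14)^2) * (S y * S y) + (-3) * U y ^ 4 + 2 * U y ^ 3 + (-10) * U y ^ 2 + (-2) * U y)"
    by (rule TP_add[OF TP_add[OF TP_add[OF TP_add[OF t1 t2] t3] t4] t5])
  then show ?thesis unfolding e .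
qed

lemma TP_F1: "TP n 4 (\<lambda>y. complex_of_real ((real n powr (-s))^2 * real n / 14 * sin (real n * y + \<omega> * t) * cos (real n * y + \<omega> * t)))"
proof -
  have "TP n 2 (\<lambda>y. complex_of_real ((real n powr (-s))^2 * real n / 14) * (complex_of_real (sin (real n * y + \<omega> * t)) * complex_of_real (cos (real n * y + \<omega> * t))))"
    by (intro TP_scale TP_mult11 TP_sin TP_cos)
  then have "TP n 4 (\<lambda>y. complex_of_real ((real n powr (-s))^2 * real n / 14) * (complex_of_real (sin (real n * y + \<omega> * t)) * complex_of_real (cos (real n * y + \<omega> * t))))"
    by (rule TP_mono[rotated]) simp
  then show ?thesis by (simp add: mult.assoc)
qed

lemma fcoeff_Kd:
  assumes "\<And>x. f x = (\<Sum>k\<in>Kd n d. c k * phi k x)"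
  shows "fcoeff f k = (if k \<in> Kd n d then c k else 0)"
proof -
  have "f = (\<lambda>x. \<Sum>k\<in>Kd n d. c k * phi k x)" using assms by (rule ext)
  then show ?thesis by (simp add: fcoeff_tp finite_Kd)
qed

lemma fmult_Kd:
  assumes "\<And>x. f x = (\<Sum>k\<in>Kd n d. c k * phi k x)"
  shows "fmult m f x = (\<Sum>k\<in>Kd n d. m k * c k * phi k x)"
proof -
  have "fmult m f x = infsum (\<lambda>k. m k * fcoeff f k * phi k x) UNIV" unfolding fmult_def ..
  also have "\<dots> = infsum (\<lambda>k. m k * c k * phi k x) (Kd n d)"
    by (rule infsum_cong_neutral) (auto simp: fcoeff_Kd[OF assms])
  also have "\<dots> = (\<Sum>k\<in>Kd n d. m k * c k * phi k x)" by (simp add: finite_Kd)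
  finally show ?thesis .
qed

lemma sobolev_Kd:
  assumes "\<And>x. f x = (\<Sum>k\<in>Kd n d. c k * phi k x)"
  shows "sobolev_norm \<sigma> f = sqrt (\<Sum>k\<in>Kd n d. (1 + (real_of_int k)^2) powr \<sigma> * (cmod (c k))^2)"
proof -
  have "infsum (\<lambda>k. (1 + (real_of_int k)^2) powr \<sigma> * (cmod (fcoeff f k))^2) UNIV
      = infsum (\<lambda>k. (1 + (real_of_int k)^2) powr \<sigma> * (cmod (c k))^2) (Kd n d)"
    by (rule infsum_cong_neutral) (auto simp: fcoeff_Kd[OF assms])
  then show ?thesis unfolding sobolev_norm_def by (simp add: finite_Kd)
qed

lemma abs_help:
  fixes X A Y Z B :: real
  assumes "0 \<le> X" "X \<le> A" "\<bar>Y\<bar> \<le> 40 * Z" "Z \<le> B"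
  shows "\<bar>X + Y\<bar> \<le> A + 40 * B"
  using assms by (simp add: abs_le_iff)

lemma R_pointwise:
  assumes n1: "n \<ge> 1" and om: "\<omega> \<in> {-1, 1}" and b0: "0 < real n powr (-s)" and b1: "real n powr (-s) \<le> 1"
  shows "\<bar>Rnl (\<lambda>z. uapp s \<omega> n t z) y - Pp ((\<omega> / real n - 1) / 14)\<bar>
          \<le> (real n powr (-s))^2 * (real n)^2 / 28 + 40 * (real n powr (-s) / 14)"
proof -
  define b where "b = real n powr (-s)"
  define th where "th = real n * y + \<omega> * t"
  define a where "a = \<omega> / real n - 1"
  have ab: "\<bar>a\<bar> \<le> 2"
  proof -
    have "\<bar>\<omega> / real n\<bar> \<le> 1" using om n1 by (auto simp: field_simps)
    then show ?thesis unfolding a_def by linarith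
  qed
  have u: "uapp s \<omega> n t y = (a - b * cos th) / 14" unfolding uapp_def a_def b_def th_def by simp
  have cb: "\<bar>cos th\<bar> \<le> 1" "\<bar>sin th\<bar> \<le> 1" by (rule abs_cos_le_one, rule abs_sin_le_one)
  have bc: "\<bar>b * cos th\<bar> \<le> b" using cb b0 unfolding b_def abs_mult by (simp add: mult_left_le)
  have bc1: "\<bar>b * cos th\<bar> \<le> 1" using bc b1 unfolding b_def by linarith
  have uu: "\<bar>(a - b * cos th) / 14\<bar> \<le> 1" using ab bc1 by simp
  have vv: "\<bar>a / 14\<bar> \<le> 1" using ab by simp
  have lip: "\<bar>Pp ((a - b * cos th) / 14) - Pp (a / 14)\<bar> \<le> 40 * \<bar>(a - b * cos th) / 14 - a / 14\<bar>"
    by (rule Pp_lip[OF uu vv])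
  have d: "\<bar>(a - b * cos th) / 14 - a / 14\<bar> \<le> b / 14" using bc by (simp add: field_simps abs_minus_commute)
  have s2: "(sin th)^2 \<le> 1" using cb by (simp add: abs_le_square_iff[symmetric] abs_square_le_1)
  have t1: "7 * (b * real n * sin th / 14)^2 = b^2 * (real n)^2 / 28 * (sin th)^2"
    by (simp add: power_mult_distrib power_divide)
  have t1b: "0 \<le> 7 * (b * real n * sin th / 14)^2" by simp
  have t1c: "7 * (b * real n * sin th / 14)^2 \<le> b^2 * (real n)^2 / 28"
    unfolding t1 using s2 by (intro mult_left_le) auto
  have "Rnl (\<lambda>z. uapp s \<omega> n t z) y - Pp ((\<omega> / real n - 1) / 14)
       = 7 * (b * real n * sin th / 14)^2 + (Pp ((a - b * cos th) / 14) - Pp (a / 14))"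
    unfolding Rnl_eq u[symmetric] by (simp add: a_def b_def th_def)
  moreover have "\<bar>7 * (b * real n * sin th / 14)^2 + (Pp ((a - b * cos th) / 14) - Pp (a / 14))\<bar> \<le> b^2 * (real n)^2 / 28 + 40 * (b / 14)"
    by (rule abs_help[OF t1b t1c lip d])
  ultimately show ?thesis unfolding b_def by simp
qed

lemma m_bound:
  assumes "k \<in> Kd n d" "n \<ge> 1"
  shows "cmod (\<i> * of_int k / complex_of_real (1 + (real_of_int k)^2)) \<le> 1 / real n"
proof (cases "k = 0")
  case True then show ?thesis by simp
next
  case False
  have "int n dvd k" using assms unfolding Kd_def by auto
  then have "\<bar>int n\<bar> \<le> \<bar>k\<bar>" by (rule dvd_imp_le_int[OF False])
  then have "real_of_int (int n) \<le> real_of_int \<bar>k\<bar>" by (simp only: of_int_le_iff)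
  then have kn: "real n \<le> \<bar>real_of_int k\<bar>" by simp
  have npos: "0 < real n" using assms by simp
  have kpos: "0 < \<bar>real_of_int k\<bar>" using False by simp
  have "cmod (\<i> * of_int k / complex_of_real (1 + (real_of_int k)^2)) = \<bar>real_of_int k\<bar> / (1 + (real_of_int k)^2)"
  proof -
    have a: "cmod (complex_of_real (1 + (real_of_int k)^2)) = 1 + (real_of_int k)^2"
      by (simp only: norm_of_real) simp
    have b: "cmod (\<i> * of_int k) = \<bar>real_of_int k\<bar>" by (simp add: norm_mult)
    show ?thesis by (simp only: norm_divide a b)
  qed
  also have "\<dots> \<le> \<bar>real_of_int k\<bar> / (real_of_int k)^2"
    using kpos by (intro divide_left_mono) (auto intro!: mult_pos_pos add_pos_pos)
  also have "\<dots> = 1 / \<bar>real_of_int k\<bar>" using kpos by (simp add: power2_eq_square field_simps)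
  also have "\<dots> \<le> 1 / real n" using kn npos by (intro divide_left_mono) auto
  finally show ?thesis .
qed

lemma weight_bound:
  assumes "k \<in> Kd n 4" "n \<ge> 1" "0 \<le> \<sigma>" "\<sigma> \<le> 1"
  shows "(1 + (real_of_int k)^2) powr \<sigma> \<le> 17 * (real n powr \<sigma>)^2"
proof -
  have "\<bar>k\<bar> \<le> 4 * int n" using assms unfolding Kd_def by auto
  then have "\<bar>real_of_int k\<bar> \<le> 4 * real n" by linarith
  then have "\<bar>real_of_int k\<bar>^2 \<le> (4 * real n)^2" by (intro power_mono) auto
  then have "(real_of_int k)^2 \<le> (4 * real n)^2" by simp
  moreover have "1 \<le> real n * real n" using assms mult_mono[of 1 "real n" 1 "real n"] by simp
  ultimately have k: "1 + (real_of_int k)^2 \<le> 17 * (real n * real n)" by (simp add: power2_eq_square)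
  have "(1 + (real_of_int k)^2) powr \<sigma> \<le> (17 * (real n * real n)) powr \<sigma>"
    using k assms by (intro powr_mono2) auto
  also have "\<dots> = 17 powr \<sigma> * (real n powr \<sigma> * real n powr \<sigma>)" by (simp add: powr_mult)
  also have "17 powr \<sigma> \<le> 17 powr (1::real)" using assms by (intro powr_mono) auto
  then have "17 powr \<sigma> * (real n powr \<sigma> * real n powr \<sigma>) \<le> 17 * (real n powr \<sigma> * real n powr \<sigma>)"
    by (intro mult_right_mono) auto
  finally show ?thesis by (simp add: power2_eq_square)
qed

lemma sq_tri: "(cmod (x - y))^2 \<le> 2 * (cmod x)^2 + 2 * (cmod y)^2"
proof -
  have "cmod (x - y) \<le> cmod x + cmod y" by (rule norm_triangle_ineq4)
  then have "(cmod (x - y))^2 \<le> (cmod x + cmod y)^2" by (intro power_mono) auto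
  also have "\<dots> \<le> 2 * (cmod x)^2 + 2 * (cmod y)^2"
  proof -
    have "0 \<le> (cmod x - cmod y)^2" by simp
    then show ?thesis unfolding power2_diff power2_sum by linarith
  qed
  finally show ?thesis .
qed

lemma main_est:
  assumes n1: "n \<ge> 1" and om: "\<omega> \<in> {-1, 1}" and sp: "s > 0" and sg: "0 \<le> \<sigma>" "\<sigma> \<le> 1"
  shows "sobolev_norm \<sigma> (Err s \<omega> n t) \<le> 53 * real n powr \<sigma> * ((real n powr (-s))^2 * real n + real n powr (-s) / real n)"
proof -
  define b where "b = real n powr (-s)"
  define N where "N = real n powr \<sigma>"
  define X where "X = b^2 * real n + b / real n"
  have npos: "0 < real n" using n1 by simp
  have b0: "0 < b" unfolding b_def using npos by simp
  have b1: "b \<le> 1"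
  proof -
    have "real n powr (-s) \<le> real n powr 0" using n1 sp by (intro powr_mono) auto
    then show ?thesis unfolding b_def using npos by simp
  qed
  have N0: "0 \<le> N" unfolding N_def by simp
  define Rc where "Rc y = complex_of_real (Rnl (\<lambda>z. uapp s \<omega> n t z) y)" for y
  obtain c where c: "\<And>y. Rc y = (\<Sum>k\<in>Kd n 4. c k * phi k y)"
    using TP_R[of n s \<omega> t] unfolding TP_def Rc_def by blast
  obtain f where f: "\<And>y. complex_of_real ((real n powr (-s))^2 * real n / 14 * sin (real n * y + \<omega> * t) * cos (real n * y + \<omega> * t))
      = (\<Sum>k\<in>Kd n 4. f k * phi k y)"
    using TP_F1[of n s \<omega> t] unfolding TP_def by blast
  define m where "m k = \<i> * of_int k / complex_of_real (1 + (real_of_int k)^2)" for k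
  have G: "dx_Lambda_m2 Rc x = (\<Sum>k\<in>Kd n 4. m k * c k * phi k x)" for x
    unfolding dx_Lambda_m2_def m_def by (rule fmult_Kd[OF c])
  have Err: "Err s \<omega> n t x = (\<Sum>k\<in>Kd n 4. (f k - m k * c k) * phi k x)" for x
  proof -
    have "Err s \<omega> n t x = (\<Sum>k\<in>Kd n 4. f k * phi k x) - (\<Sum>k\<in>Kd n 4. m k * c k * phi k x)"
      unfolding Err_def F1_eq[OF n1] f[symmetric] G[symmetric] Rc_def[abs_def] ..
    then show ?thesis by (simp add: sum_subtractf left_diff_distrib)
  qed
  have sob: "sobolev_norm \<sigma> (Err s \<omega> n t) = sqrt (\<Sum>k\<in>Kd n 4. (1 + (real_of_int k)^2) powr \<sigma> * (cmod (f k - m k * c k))^2)"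
    by (rule sobolev_Kd[OF Err])
  have P1: "(\<Sum>k\<in>Kd n 4. (cmod (f k))^2) \<le> 2 * pi * (b^2 * real n / 14)^2"
  proof (rule parseval_bound[OF finite_Kd])
    fix x :: real
    have "cmod (\<Sum>k\<in>Kd n 4. f k * phi k x) = \<bar>b^2 * real n / 14 * (sin (real n * x + \<omega> * t) * cos (real n * x + \<omega> * t))\<bar>"
      unfolding f[symmetric] norm_of_real b_def by (simp add: mult.assoc)
    also have "\<dots> \<le> b^2 * real n / 14 * 1"
    proof -
      have e: "\<bar>b^2 * real n / 14\<bar> = b^2 * real n / 14" using npos by simp
      have "\<bar>sin (real n * x + \<omega> * t)\<bar> * \<bar>cos (real n * x + \<omega> * t)\<bar> \<le> 1"
        by (intro mult_le_one abs_sin_le_one abs_cos_le_one) auto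
      then show ?thesis unfolding abs_mult e using npos by (intro mult_left_mono) auto
    qed
    finally show "cmod (\<Sum>k\<in>Kd n 4. f k * phi k x) \<le> b^2 * real n / 14" by simp
  qed
  define A where "A = complex_of_real (Pp ((\<omega> / real n - 1) / 14))"
  define c' where "c' k = c k - (if k = 0 then A * complex_of_real (sqrt (2*pi)) else 0)" for k
  define MR where "MR = b^2 * (real n)^2 / 28 + 40 * (b / 14)"
  have c'eq: "(\<Sum>k\<in>Kd n 4. c' k * phi k y) = Rc y - A" for y
  proof -
    have "(\<Sum>k\<in>Kd n 4. (if k = 0 then A * complex_of_real (sqrt (2*pi)) else 0) * phi k y)
        = (\<Sum>k\<in>Kd n 4. if k = 0 then A * complex_of_real (sqrt (2*pi)) * phi 0 y else 0)"
      by (intro sum.cong) auto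
    also have "\<dots> = A * complex_of_real (sqrt (2*pi)) * phi 0 y"
      using finite_Kd zero_Kd by (simp add: sum.delta')
    also have "\<dots> = A" unfolding phi0 using sqrt2pi_nz by simp
    finally have "(\<Sum>k\<in>Kd n 4. (if k = 0 then A * complex_of_real (sqrt (2*pi)) else 0) * phi k y) = A" .
    then show ?thesis unfolding c'_def c by (simp add: left_diff_distrib sum_subtractf)
  qed
  have P2: "(\<Sum>k\<in>Kd n 4. (cmod (c' k))^2) \<le> 2 * pi * MR^2"
  proof (rule parseval_bound[OF finite_Kd])
    fix x :: real
    have "cmod (\<Sum>k\<in>Kd n 4. c' k * phi k x) = \<bar>Rnl (\<lambda>z. uapp s \<omega> n t z) x - Pp ((\<omega> / real n - 1) / 14)\<bar>"
      unfolding c'eq Rc_def A_def of_real_diff[symmetric] norm_of_real ..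
    also have "\<dots> \<le> MR" unfolding MR_def b_def
      by (rule R_pointwise[OF n1 om]) (use b0 b1 in \<open>simp_all add: b_def\<close>)
    finally show "cmod (\<Sum>k\<in>Kd n 4. c' k * phi k x) \<le> MR" .
  qed
  have mc: "m k * c k = m k * c' k" for k by (simp add: m_def c'_def)
  have X0: "0 \<le> X" unfolding X_def using b0 npos by simp
  have MR0: "0 \<le> MR" unfolding MR_def using b0 by simp
  have tm: "(1 + (real_of_int k)^2) powr \<sigma> * (cmod (f k - m k * c k))^2
      \<le> (17 * N^2) * (2 * (cmod (f k))^2 + 2 * (1 / real n)^2 * (cmod (c' k))^2)" if k: "k \<in> Kd n 4" for k
  proof -
    have w: "(1 + (real_of_int k)^2) powr \<sigma> \<le> 17 * N^2" unfolding N_def by (rule weight_bound[OF k n1 sg])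
    have mb: "cmod (m k) \<le> 1 / real n" unfolding m_def by (rule m_bound[OF k n1])
    have "(cmod (m k * c' k))^2 = (cmod (m k))^2 * (cmod (c' k))^2" by (simp add: norm_mult power_mult_distrib)
    also have "\<dots> \<le> (1 / real n)^2 * (cmod (c' k))^2" using mb by (intro mult_right_mono power_mono) auto
    finally have q: "(cmod (m k * c' k))^2 \<le> (1 / real n)^2 * (cmod (c' k))^2" .
    have "(cmod (f k - m k * c k))^2 \<le> 2 * (cmod (f k))^2 + 2 * (cmod (m k * c' k))^2"
      unfolding mc by (rule sq_tri)
    also have "\<dots> \<le> 2 * (cmod (f k))^2 + 2 * (1 / real n)^2 * (cmod (c' k))^2" using q by simp
    finally have q2: "(cmod (f k - m k * c k))^2 \<le> 2 * (cmod (f k))^2 + 2 * (1 / real n)^2 * (cmod (c' k))^2" .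
    show ?thesis by (rule mult_mono[OF w q2]) auto
  qed
  have "(\<Sum>k\<in>Kd n 4. (1 + (real_of_int k)^2) powr \<sigma> * (cmod (f k - m k * c k))^2)
      \<le> (\<Sum>k\<in>Kd n 4. (17 * N^2) * (2 * (cmod (f k))^2 + 2 * (1 / real n)^2 * (cmod (c' k))^2))"
    by (rule sum_mono[OF tm])
  also have "\<dots> = (34 * N^2) * ((\<Sum>k\<in>Kd n 4. (cmod (f k))^2) + (1 / real n)^2 * (\<Sum>k\<in>Kd n 4. (cmod (c' k))^2))"
    by (simp add: sum_distrib_left sum.distrib algebra_simps)
  also have "\<dots> \<le> (34 * N^2) * (2 * pi * (b^2 * real n / 14)^2 + (1 / real n)^2 * (2 * pi * MR^2))"
    using P1 P2 by (intro mult_left_mono add_mono mult_left_mono) auto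
  also have "\<dots> \<le> (34 * N^2) * (2 * pi * X^2 + 2 * pi * (9 * X^2))"
  proof -
    have a: "b^2 * real n / 14 \<le> X" unfolding X_def using b0 npos by simp
    have a2: "(b^2 * real n / 14)^2 \<le> X^2" using a b0 npos by (intro power_mono) auto
    have "MR / real n = b^2 * real n / 28 + 40 / 14 * (b / real n)" unfolding MR_def using npos
      by (simp add: field_simps power2_eq_square)
    also have "\<dots> \<le> 3 * X"
    proof -
      have y: "0 \<le> b / real n" using b0 npos by simp
      have "40 / 14 * (b / real n) \<le> 3 * (b / real n)" using y by (intro mult_right_mono) auto
      moreover have "0 \<le> b^2 * real n" using npos by simp
      ultimately show ?thesis unfolding X_def distrib_left by linarith
    qed
    finally have "MR / real n \<le> 3 * X" .
    then have "(MR / real n)^2 \<le> (3 * X)^2" using MR0 npos by (intro power_mono) auto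
    then have c2: "(1 / real n)^2 * MR^2 \<le> 9 * X^2" by (simp add: power_divide power_mult_distrib)
    have "(1 / real n)^2 * (2 * pi * MR^2) = 2 * pi * ((1 / real n)^2 * MR^2)" by simp
    also have "\<dots> \<le> 2 * pi * (9 * X^2)" using c2 by (intro mult_left_mono) auto
    finally have c3: "(1 / real n)^2 * (2 * pi * MR^2) \<le> 2 * pi * (9 * X^2)" .
    have c4: "2 * pi * (b^2 * real n / 14)^2 \<le> 2 * pi * X^2" using a2 by (intro mult_left_mono) auto
    have "2 * pi * (b^2 * real n / 14)^2 + (1 / real n)^2 * (2 * pi * MR^2) \<le> 2 * pi * X^2 + 2 * pi * (9 * X^2)"
      by (rule add_mono[OF c4 c3])
    then show ?thesis by (rule mult_left_mono) simp
  qed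
  also have "\<dots> = (680 * pi) * (N * X)^2" by (simp add: power_mult_distrib algebra_simps)
  also have "\<dots> \<le> (53 * (N * X))^2"
  proof -
    have "680 * pi \<le> 2809" using pi_less_4 by simp
    then have "(680 * pi) * (N * X)^2 \<le> 2809 * (N * X)^2" by (intro mult_right_mono) auto
    then show ?thesis by (simp add: power_mult_distrib)
  qed
  finally have "sobolev_norm \<sigma> (Err s \<omega> n t) \<le> sqrt ((53 * (N * X))^2)" unfolding sob by (rule real_sqrt_le_mono)
  also have "\<dots> = 53 * (N * X)" using N0 X0 by (simp only: real_sqrt_abs) simp
  finally show ?thesis unfolding N_def X_def b_def by (simp add: mult.assoc)
qed

lemma powr_facts:
  assumes "n \<ge> 1"
  shows "(real n powr (-s))^2 * real n = real n powr (1 - 2 * s)"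
    "real n powr (-s) / real n = real n powr (- s - 1)"
proof -
  have np: "0 < real n" using assms by simp
  have "(real n powr (-s))^2 * real n = real n powr (-s) * real n powr (-s) * real n powr 1"
    using np by (simp add: power2_eq_square)
  also have "\<dots> = real n powr (-s + -s + 1)" by (simp only: powr_add[symmetric])
  also have "\<dots> = real n powr (1 - 2 * s)" by (simp add: algebra_simps)
  finally show "(real n powr (-s))^2 * real n = real n powr (1 - 2 * s)" .
  have "real n powr (-s) / real n = real n powr (-s) / real n powr 1" using np by simp
  also have "\<dots> = real n powr (- s - 1)" by (simp only: powr_diff[symmetric])
  finally show "real n powr (-s) / real n = real n powr (- s - 1)" .
qed

theorem lemma3p1:
  fixes s :: real
  assumes "s > 3/2"
  shows "\<exists>C>0. \<forall>\<sigma>::real. \<forall>\<omega>::real. \<forall>n::nat. \<forall>t::real.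
           1/2 < \<sigma> \<and> \<sigma> \<le> 1 \<and> \<omega> \<in> {-1, 1} \<and> n \<ge> 1 \<longrightarrow>
           sobolev_norm \<sigma> (Err s \<omega> n t) \<le>
             (if s < 2 then C * real n powr (1 + \<sigma> - 2 * s)
                       else C * real n powr (\<sigma> - s - 1))"
proof (intro exI[of _ 106] conjI allI impI)
  fix \<sigma> \<omega> :: real and n :: nat and t :: real
  assume h: "1/2 < \<sigma> \<and> \<sigma> \<le> 1 \<and> \<omega> \<in> {-1, 1} \<and> n \<ge> 1"
  then have n1: "n \<ge> 1" and om: "\<omega> \<in> {-1, 1}" and sg: "0 \<le> \<sigma>" "\<sigma> \<le> 1" by auto
  have sp: "s > 0" using assms by simp
  have np: "0 < real n" "1 \<le> real n" using n1 by auto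
  have est: "sobolev_norm \<sigma> (Err s \<omega> n t) \<le> 53 * real n powr \<sigma> * (real n powr (1 - 2 * s) + real n powr (- s - 1))"
    using main_est[OF n1 om sp sg, of t] unfolding powr_facts[OF n1] .
  have N0: "0 \<le> real n powr \<sigma>" by simp
  show "sobolev_norm \<sigma> (Err s \<omega> n t) \<le>
             (if s < 2 then 106 * real n powr (1 + \<sigma> - 2 * s)
                       else 106 * real n powr (\<sigma> - s - 1))"
  proof (cases "s < 2")
    case True
    have "real n powr (- s - 1) \<le> real n powr (1 - 2 * s)" using True np by (intro powr_mono) auto
    then have "53 * real n powr \<sigma> * (real n powr (1 - 2 * s) + real n powr (- s - 1))
        \<le> 53 * real n powr \<sigma> * (2 * real n powr (1 - 2 * s))" using N0 by (intro mult_left_mono) auto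
    also have "\<dots> = 106 * (real n powr \<sigma> * real n powr (1 - 2 * s))" by simp
    also have "\<dots> = 106 * real n powr (1 + \<sigma> - 2 * s)" by (simp only: powr_add[symmetric]) (simp add: algebra_simps)
    finally show ?thesis using est True by simp
  next
    case False
    have "real n powr (1 - 2 * s) \<le> real n powr (- s - 1)" using False np by (intro powr_mono) auto
    then have "53 * real n powr \<sigma> * (real n powr (1 - 2 * s) + real n powr (- s - 1))
        \<le> 53 * real n powr \<sigma> * (2 * real n powr (- s - 1))" using N0 by (intro mult_left_mono) auto
    also have "\<dots> = 106 * (real n powr \<sigma> * real n powr (- s - 1))" by simp
    also have "\<dots> = 106 * real n powr (\<sigma> - s - 1)" by (simp only: powr_add[symmetric]) (simp add: algebra_simps)
    finally show ?thesis using est False by simp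
  qed
qed simp

end
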